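(* Let $(K,\mathrm{val})$ be a $2$-henselian valued field whose residue class field $F$ has characteristic $\neq2$, let $A$ be a subring with $B\subseteq A\subseteq K$ and $H=\mathrm{val}(A^\times)$. Let $(M_g)_{g\in H\cup G_{\ge e}}$ be a family of quasi-quadratic modules in $F$ such that $M_g\subseteq M_h$ whenever either (i) $g\le h$ and $\overline g=\overline h$, or (ii) $M_g=F$ and ($[g]=[h]$ or $g\le h$). Then $\bigcup_{g\in H\cup G_{\ge e}}\Phi^A(M_g,[\![g]\!])$ is a quasi-quadratic module in $A$.
   Context: Let $(G,\le)$ be a totally ordered abelian group written multiplicatively with identity $e$; $G_{\ge e}=\{g\in G:g\ge e\}$, $G^2=\{g^2:g\in G\}$. Let $(K,\mathrm{val})$ be a valued field with surjective valuation $\mathrm{val}:K\to G\cup\{\infty\}$, valuation ring $B=\{x:\mathrm{val}(x)\ge e\}$, residue map $\pi:B\to F$, residue field $F$. A strict unit is $x\in B^\times$ with $\pi(x)=1$; when $\mathrm{char}F\ne2$, $2$-henselian is equivalent to every strict unit being a square in $K$. For a subring $A$ with $B\subseteq A\subseteq K$ put $H=\mathrm{val}(A^\times)$; $H$ is a convex subgroup of $G$ and $\mathrm{val}(A\setminus\{0\})=H\cup G_{\ge e}$. For $g\in G$: $\overline g$ is its class in $G/G^2$, $[\![g]\!]$ its class in $G/H^2$, $[g]$ its class in $G/H$; "$\mathrm{val}(x)=\overline g$" means $\overline{\mathrm{val}(x)}=\overline g$, similarly for $[\![\cdot]\!]$. A quasi-quadratic module in a commutative ring $R$ is a subset $M\subseteq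 R$ with $M+M\subseteq M$ and $a^2M\subseteq M$ for all $a\in R$. A pseudo-angular component map is a map $\mathrm{p.an}:K^\times\to F^\times$ such that: (1) $\mathrm{p.an}(u)=\pi(u)$ for $u\in B^\times$; (2) $\mathrm{p.an}(ux)=\pi(u)\mathrm{p.an}(x)$ for $u\in B^\times,x\in K^\times$; (3) for all $g\in G$, $c\in F^\times$ there is $w\in K$ with $\mathrm{val}(w)=g$, $\mathrm{p.an}(w)=c$; (4) for nonzero $x_1,x_2$ with $x_1+x_2\ne0$: if $\mathrm{val}(x_1)<\mathrm{val}(x_2)$ then $\mathrm{p.an}(x_1+x_2)=\mathrm{p.an}(x_1)$; if $\mathrm{val}(x_1)=\mathrm{val}(x_2)$ and $\mathrm{p.an}(x_1)+\mathrm{p.an}(x_2)\ne0$ then $\mathrm{val}(x_1+x_2)=\mathrm{val}(x_1)$ and $\mathrm{p.an}(x_1+x_2)=\mathrm{p.an}(x_1)+\mathrm{p.an}(x_2)$; (5) if $x,y\in K^\times$, $\overline{\mathrm{val}(x)}=\overline{\mathrm{val}(y)}$ and $\mathrm{p.an}(x)=\mathrm{p.an}(y)$ then $y=u^2x$ for some $u\in K^\times$; (6) for $a,u\in K^\times$ there is $k\in F^\times$ with $\mathrm{p.an}(au^2)=\mathrm{p.an}(a)k^2$. Such a map exists under the hypotheses; fix one. For $g\in G$ and a quasi-quadratic module $M$ in $F$: $$\Phi^A(M,[\![g]\!])=\{x\in A\setminus\{0\}:\ \mathrm{val}(x)=\overline g,\ (\mathrm{val}(x)=[\![g]\!]\ \text{or}\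 \mathrm{val}(x)>g),\ \mathrm{p.an}(x)\in M\}\cup\{0\}.$$ *)

theory Defs
  imports Main
begin

text \<open>Totally ordered abelian group G is written additively (type class
linordered_ab_group_add); identity e is 0.  The valuation is a map on K
whose values at 0 are irrelevant (val 0 = infinity is encoded by x = 0).\<close>

definition valuation :: "('k::field \<Rightarrow> 'g::linordered_ab_group_add) \<Rightarrow> bool" where
  "valuation v \<longleftrightarrow>
     (\<forall>x y. x \<noteq> 0 \<longrightarrow> y \<noteq> 0 \<longrightarrow> v (x * y) = v x + v y) \<and>
     (\<forall>x y. x \<noteq> 0 \<longrightarrow> y \<noteq> 0 \<longrightarrow> x + y \<noteq> 0 \<longrightarrow> min (v x) (v y) \<le> v (x + y)) \<and>
     v ` {x. x \<noteq> 0} = UNIV"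

definition valring :: "('k::field \<Rightarrow> 'g::linordered_ab_group_add) \<Rightarrow> 'k set" where
  "valring v = {x. x = 0 \<or> 0 \<le> v x}"

definition valunits :: "('k::field \<Rightarrow> 'g::linordered_ab_group_add) \<Rightarrow> 'k set" where
  "valunits v = {x. x \<noteq> 0 \<and> v x = 0}"

definition residue_map :: "('k::field \<Rightarrow> 'g::linordered_ab_group_add) \<Rightarrow> ('k \<Rightarrow> 'f::field) \<Rightarrow> bool" where
  "residue_map v res \<longleftrightarrow>
     (\<forall>x\<in>valring v. \<forall>y\<in>valring v. res (x + y) = res x + res y \<and> res (x * y) = res x * res y) \<and>
     res 1 = 1 \<and>
     res ` valring v = UNIV \<and>
     (\<forall>x\<in>valring v. res x = 0 \<longleftrightarrow> (x = 0 \<or> 0 < v x))"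

definition strict_unit :: "('k::field \<Rightarrow> 'g::linordered_ab_group_add) \<Rightarrow> ('k \<Rightarrow> 'f::field) \<Rightarrow> 'k \<Rightarrow> bool" where
  "strict_unit v res x \<longleftrightarrow> x \<in> valunits v \<and> res x = 1"

text \<open>2-henselian, in the form valid when char F \<noteq> 2.\<close>
definition two_henselian :: "('k::field \<Rightarrow> 'g::linordered_ab_group_add) \<Rightarrow> ('k \<Rightarrow> 'f::field) \<Rightarrow> bool" where
  "two_henselian v res \<longleftrightarrow> (\<forall>x. strict_unit v res x \<longrightarrow> (\<exists>y. x = y\<^sup>2))"

definition subring_between :: "('k::field \<Rightarrow> 'g::linordered_ab_group_add) \<Rightarrow> 'k set \<Rightarrow> bool" where
  "subring_between v A \<longleftrightarrow>
     valring v \<subseteq> A \<and> 0 \<in> A \<and> 1 \<in> A \<and>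
     (\<forall>x\<in>A. \<forall>y\<in>A. x + y \<in> A \<and> x * y \<in> A \<and> - x \<in> A)"

definition Hgrp :: "('k::field \<Rightarrow> 'g::linordered_ab_group_add) \<Rightarrow> 'k set \<Rightarrow> 'g set" where
  "Hgrp v A = v ` {x\<in>A. x \<noteq> 0 \<and> inverse x \<in> A}"

definition qqm :: "'a::comm_ring_1 set \<Rightarrow> 'a set \<Rightarrow> bool" where
  "qqm R M \<longleftrightarrow> M \<subseteq> R \<and> (\<forall>x\<in>M. \<forall>y\<in>M. x + y \<in> M) \<and> (\<forall>a\<in>R. \<forall>x\<in>M. a\<^sup>2 * x \<in> M)"

definition eq_mod_sq :: "'g::linordered_ab_group_add \<Rightarrow> 'g \<Rightarrow> bool" where
  "eq_mod_sq g h \<longleftrightarrow> (\<exists>k. g - h = k + k)"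

definition eq_mod_Hsq :: "'g set \<Rightarrow> 'g::linordered_ab_group_add \<Rightarrow> 'g \<Rightarrow> bool" where
  "eq_mod_Hsq H g h \<longleftrightarrow> (\<exists>k\<in>H. g - h = k + k)"

definition eq_mod_H :: "'g set \<Rightarrow> 'g::linordered_ab_group_add \<Rightarrow> 'g \<Rightarrow> bool" where
  "eq_mod_H H g h \<longleftrightarrow> g - h \<in> H"

definition pseudo_ac :: "('k::field \<Rightarrow> 'g::linordered_ab_group_add) \<Rightarrow> ('k \<Rightarrow> 'f::field) \<Rightarrow> ('k \<Rightarrow> 'f) \<Rightarrow> bool" where
  "pseudo_ac v res pan \<longleftrightarrow>
     (\<forall>x. x \<noteq> 0 \<longrightarrow> pan x \<noteq> 0) \<and>
     (\<forall>u\<in>valunits v. pan u = res u) \<and>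
     (\<forall>u\<in>valunits v. \<forall>x. x \<noteq> 0 \<longrightarrow> pan (u * x) = res u * pan x) \<and>
     (\<forall>g c. c \<noteq> 0 \<longrightarrow> (\<exists>w. w \<noteq> 0 \<and> v w = g \<and> pan w = c)) \<and>
     (\<forall>x1 x2. x1 \<noteq> 0 \<longrightarrow> x2 \<noteq> 0 \<longrightarrow> x1 + x2 \<noteq> 0 \<longrightarrow>
        (v x1 < v x2 \<longrightarrow> pan (x1 + x2) = pan x1) \<and>
        (v x1 = v x2 \<longrightarrow> pan x1 + pan x2 \<noteq> 0 \<longrightarrow>
           v (x1 + x2) = v x1 \<and> pan (x1 + x2) = pan x1 + pan x2)) \<and>
     (\<forall>x y. x \<noteq> 0 \<longrightarrow> y \<noteq> 0 \<longrightarrow> eq_mod_sq (v x) (v y) \<longrightarrow> pan x = pan y \<longrightarrow>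
        (\<exists>u. u \<noteq> 0 \<and> y = u\<^sup>2 * x)) \<and>
     (\<forall>a u. a \<noteq> 0 \<longrightarrow> u \<noteq> 0 \<longrightarrow> (\<exists>k. k \<noteq> 0 \<and> pan (a * u\<^sup>2) = pan a * k\<^sup>2))"

definition Phi :: "('k::field \<Rightarrow> 'g::linordered_ab_group_add) \<Rightarrow> ('k \<Rightarrow> 'f::field) \<Rightarrow> 'k set \<Rightarrow> 'f set \<Rightarrow> 'g \<Rightarrow> 'k set" where
  "Phi v pan A M g =
     {x\<in>A. x \<noteq> 0 \<and> eq_mod_sq (v x) g \<and> (eq_mod_Hsq (Hgrp v A) (v x) g \<or> g < v x) \<and> pan x \<in> M}
     \<union> {0}"

end

theory Submission
  imports Defs
begin


locale setting =
  fixes v :: "'k::field \<Rightarrow> 'g::linordered_ab_group_add"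
    and res :: "'k \<Rightarrow> 'f::field"
    and pan :: "'k \<Rightarrow> 'f"
    and A :: "'k set"
  assumes val: "valuation v"
    and resm: "residue_map v res"
    and pac: "pseudo_ac v res pan"
    and subA: "subring_between v A"
begin

abbreviation "H \<equiv> Hgrp v A"

lemma vmult: "x \<noteq> 0 \<Longrightarrow> y \<noteq> 0 \<Longrightarrow> v (x*y) = v x + v y"
  using val unfolding valuation_def by blast
lemma vmin: "x \<noteq> 0 \<Longrightarrow> y \<noteq> 0 \<Longrightarrow> x + y \<noteq> 0 \<Longrightarrow> min (v x) (v y) \<le> v (x+y)"
  using val unfolding valuation_def by blast
lemma vsurj: "\<exists>x. x \<noteq> 0 \<and> v x = g"
proof -
  have "g \<in> v ` {x. x \<noteq> 0}" using val unfolding valuation_def by blast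
  then show ?thesis by blast
qed
lemma v1: "v 1 = 0" using vmult[of 1 1] by simp
lemma vinv: "x \<noteq> 0 \<Longrightarrow> v (inverse x) = - v x"
  using vmult[of x "inverse x"] v1 by (simp add: eq_neg_iff_add_eq_0 add.commute)
lemma double0: "(a::'g) + a = 0 \<Longrightarrow> a = 0"
proof (rule ccontr)
  assume "a + a = 0" "a \<noteq> 0"
  then have "a < 0 \<or> 0 < a" by auto
  then show False using \<open>a + a = 0\<close> add_neg_neg[of a a] add_pos_pos[of a a] by auto
qed
lemma vm1: "v (-1) = 0" using vmult[of "-1" "-1"] v1 double0 by simp
lemma vneg: "v (-x) = v x"
proof (cases "x = 0")
  case False then show ?thesis using vmult[of "-1" x] vm1 by simp
qed simp
lemma valring_add: "x \<in> valring v \<Longrightarrow> y \<in> valring v \<Longrightarrow> x + y \<in> valring v"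
  unfolding valring_def using vmin[of x y] by (cases "x = 0"; cases "y = 0"; cases "x + y = 0"; auto intro: order_trans[OF min.boundedI])
lemma valring_neg: "x \<in> valring v \<Longrightarrow> - x \<in> valring v"
  unfolding valring_def using vneg by auto
lemma one_valring: "1 \<in> valring v" unfolding valring_def using v1 by auto
lemma valring_A: "x \<in> valring v \<Longrightarrow> x \<in> A" using subA unfolding subring_between_def by blast
lemma A_add: "x \<in> A \<Longrightarrow> y \<in> A \<Longrightarrow> x + y \<in> A" using subA unfolding subring_between_def by blast
lemma A_mult: "x \<in> A \<Longrightarrow> y \<in> A \<Longrightarrow> x * y \<in> A" using subA unfolding subring_between_def by blast
lemma A_1: "1 \<in> A" using subA unfolding subring_between_def by blast
lemma A_0: "0 \<in> A" using subA unfolding subring_between_def by blast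

lemma vadd_less: assumes "x \<noteq> 0" "y \<noteq> 0" "v x < v y" shows "x + y \<noteq> 0" "v (x + y) = v x"
proof -
  show nz: "x + y \<noteq> 0" proof
    assume "x + y = 0" then have "y = - x" by (simp add: eq_neg_iff_add_eq_0 add.commute)
    then show False using assms vneg by simp
  qed
  have "min (v x) (v y) \<le> v (x+y)" using vmin assms nz by blast
  then have ge: "v x \<le> v (x+y)" using assms by simp
  have "min (v (x+y)) (v (-y)) \<le> v ((x+y) + (-y))" using vmin[of "x+y" "-y"] nz assms by simp
  then have "min (v (x+y)) (v y) \<le> v x" using vneg by simp
  then show "v (x+y) = v x" using ge assms by (simp add: min_def split: if_splits)
qed

lemma H0: "0 \<in> H" unfolding Hgrp_def using A_1 v1 by force
lemma Hneg: "h \<in> H \<Longrightarrow> - h \<in> H"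
  unfolding Hgrp_def using vinv by (auto intro!: image_eqI[where x="inverse _"])
lemma Hadd: "h1 \<in> H \<Longrightarrow> h2 \<in> H \<Longrightarrow> h1 + h2 \<in> H"
  unfolding Hgrp_def
  apply clarsimp
  subgoal for x y
    apply (rule image_eqI[where x="x*y"])
    using vmult A_mult by (auto simp: mult.commute)
  done
lemma Hconv: assumes "0 \<le> t" "t \<le> h" "h \<in> H" shows "t \<in> H"
proof -
  obtain y where y: "y \<in> A" "y \<noteq> 0" "inverse y \<in> A" "v y = h" using assms(3) unfolding Hgrp_def by auto
  obtain z where z: "z \<noteq> 0" "v z = t" using vsurj by blast
  have zA: "z \<in> A" using z assms valring_A unfolding valring_def by auto
  have "v (y * inverse z) = h - t" using vmult[of y "inverse z"] vinv[of z] y z by simp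
  then have "y * inverse z \<in> A" using valring_A assms unfolding valring_def by simp
  then have "inverse y * (y * inverse z) \<in> A" using A_mult y by blast
  then have "inverse z \<in> A" using y by (simp add: mult.assoc[symmetric])
  then show ?thesis unfolding Hgrp_def using zA z by auto
qed
lemma Hconvn: assumes "t \<le> 0" "h \<le> t" "h \<in> H" shows "t \<in> H"
  using Hconv[of "-t" "-h"] Hneg[of h] Hneg[of "-t"] assms by simp
lemma Hhalf: assumes "k + k \<in> H" shows "k \<in> H"
proof (cases "0 \<le> k")
  case True then show ?thesis using Hconv[OF True _ assms] by (simp add: add_increasing)
next
  case False then have "k + k \<le> k" by (simp add: add_decreasing)
  then show ?thesis using Hconvn[of k "k+k"] False assms by simp
qed
lemma Aneg: assumes "a \<in> A" "a \<noteq> 0" "v a < 0" shows "v a \<in> H"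
proof -
  have "inverse a \<in> valring v" using vinv assms unfolding valring_def by simp
  then show ?thesis unfolding Hgrp_def using assms valring_A by auto
qed
lemma Aval: "a \<in> A \<Longrightarrow> a \<noteq> 0 \<Longrightarrow> v a \<in> H \<or> 0 \<le> v a"
  using Aneg by force
lemma big: assumes "0 \<le> t" "t \<notin> H" "h \<in> H" shows "h < t"
proof (rule ccontr)
  assume "\<not> h < t" then have "t \<le> h" by simp
  then show False using Hconv assms by blast
qed

end

context setting begin

lemma res_add: "x \<in> valring v \<Longrightarrow> y \<in> valring v \<Longrightarrow> res (x + y) = res x + res y"
  using resm unfolding residue_map_def by blast
lemma res_mult: "x \<in> valring v \<Longrightarrow> y \<in> valring v \<Longrightarrow> res (x * y) = res x * res y"
  using resm unfolding residue_map_def by blast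
lemma res1: "res 1 = 1" using resm unfolding residue_map_def by blast
lemma res_zero: "x \<in> valring v \<Longrightarrow> res x = 0 \<longleftrightarrow> (x = 0 \<or> 0 < v x)"
  using resm unfolding residue_map_def by blast
lemma res0: "res 0 = 0" using res_zero[of 0] unfolding valring_def by simp
lemma m1_valring: "-1 \<in> valring v" using valring_neg one_valring by blast
lemma resm1: "res (-1) = -1"
  using res_add[OF m1_valring one_valring] res0 res1 by (simp add: eq_neg_iff_add_eq_0)
lemma m1_unit: "-1 \<in> valunits v" unfolding valunits_def using vm1 by simp

lemma pan_nz: "x \<noteq> 0 \<Longrightarrow> pan x \<noteq> 0" using pac unfolding pseudo_ac_def by blast
lemma pan_umult: "u \<in> valunits v \<Longrightarrow> x \<noteq> 0 \<Longrightarrow> pan (u * x) = res u * pan x"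
  using pac unfolding pseudo_ac_def by blast
lemma pan_less: "x1 \<noteq> 0 \<Longrightarrow> x2 \<noteq> 0 \<Longrightarrow> x1 + x2 \<noteq> 0 \<Longrightarrow> v x1 < v x2 \<Longrightarrow> pan (x1 + x2) = pan x1"
  using pac unfolding pseudo_ac_def by blast
lemma pan_eq: "x1 \<noteq> 0 \<Longrightarrow> x2 \<noteq> 0 \<Longrightarrow> x1 + x2 \<noteq> 0 \<Longrightarrow> v x1 = v x2 \<Longrightarrow> pan x1 + pan x2 \<noteq> 0 \<Longrightarrow>
   v (x1 + x2) = v x1 \<and> pan (x1 + x2) = pan x1 + pan x2"
  using pac unfolding pseudo_ac_def by blast
lemma pan5: "x \<noteq> 0 \<Longrightarrow> y \<noteq> 0 \<Longrightarrow> eq_mod_sq (v x) (v y) \<Longrightarrow> pan x = pan y \<Longrightarrow> \<exists>u. u \<noteq> 0 \<and> y = u\<^sup>2 * x"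
  using pac unfolding pseudo_ac_def by blast
lemma pan6: "a \<noteq> 0 \<Longrightarrow> u \<noteq> 0 \<Longrightarrow> \<exists>k. k \<noteq> 0 \<and> pan (a * u\<^sup>2) = pan a * k\<^sup>2"
  using pac unfolding pseudo_ac_def by blast
lemma pan_neg: "x \<noteq> 0 \<Longrightarrow> pan (- x) = - pan x"
  using pan_umult[OF m1_unit, of x] resm1 by simp

lemma key: assumes "x \<noteq> 0" "y \<noteq> 0" "v x = v y" "pan x + pan y = 0" "x + y \<noteq> 0"
  shows "v x < v (x + y)"
proof -
  have "pan (-x) = pan y" using pan_neg[OF assms(1)] assms(4) by (metis add.commute add_right_cancel eq_neg_iff_add_eq_0)
  moreover have "eq_mod_sq (v (-x)) (v y)" unfolding eq_mod_sq_def using vneg assms by (intro exI[of _ 0]) simp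
  ultimately obtain u where u: "u \<noteq> 0" "y = u\<^sup>2 * (-x)" using pan5[of "-x" y] assms by auto
  have "v y = v u + v u + v x" using u vmult[of "u*u" "-x"] vmult[of u u] vneg assms
    by (simp add: power2_eq_square)
  then have "v u + v u = 0" using assms by (metis add_0 add_right_cancel)
  then have vu: "v u = 0" using double0 by blast
  have vu2: "v (u\<^sup>2) = 0" using vmult[of u u] vu u by (simp add: power2_eq_square)
  then have un: "u\<^sup>2 \<in> valunits v" unfolding valunits_def using u by simp
  have "pan y = res (u\<^sup>2) * pan (-x)" using u pan_umult[OF un, of "-x"] assms by simp
  then have "pan y = res (u\<^sup>2) * pan y" using \<open>pan (-x) = pan y\<close> by simp
  then have r1: "res (u\<^sup>2) = 1" using pan_nz[OF assms(2)] by simp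
  have u2r: "u\<^sup>2 \<in> valring v" using vu2 unfolding valring_def by simp
  have wr: "1 - u\<^sup>2 \<in> valring v" using valring_add[OF one_valring valring_neg[OF u2r]] by simp
  have "res ((1 - u\<^sup>2) + u\<^sup>2) = res (1 - u\<^sup>2) + res (u\<^sup>2)" using res_add[OF wr u2r] .
  then have "res (1 - u\<^sup>2) = 0" using res1 r1 by simp
  moreover have xy: "x + y = (1 - u\<^sup>2) * x" using u by (simp add: algebra_simps)
  then have wnz: "1 - u\<^sup>2 \<noteq> 0" using assms by auto
  ultimately have "0 < v (1 - u\<^sup>2)" using res_zero[OF wr] by simp
  moreover have "v (x + y) = v (1 - u\<^sup>2) + v x" using xy vmult wnz assms by simp
  ultimately show ?thesis by (metis add_strict_right_mono add_0)
qed

end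

lemma qqm_full: fixes M :: "'f::field set" assumes "qqm UNIV M" "(2::'f::field) \<noteq> 0" "t \<in> M" "-t \<in> M" "t \<noteq> 0"
  shows "M = UNIV"
proof -
  { fix c
    define s where "s = c / t"
    have a: "((1+s)/2)\<^sup>2 * t \<in> M" "((1-s)/2)\<^sup>2 * (-t) \<in> M" using assms unfolding qqm_def by blast+
    have "((1+s)/2)\<^sup>2 * t + ((1-s)/2)\<^sup>2 * (-t) \<in> M" using a assms unfolding qqm_def by blast
    moreover have "((1+s)/2)\<^sup>2 * t + ((1-s)/2)\<^sup>2 * (-t) = c"
    proof -
      have fac: "\<And>a b::'f. a\<^sup>2 * t + b\<^sup>2 * (-t) = (a - b) * (a + b) * t"
        by (simp add: power2_eq_square algebra_simps)
      have e1: "(1+s)/2 + (1-s)/2 = 1" using assms(2) by (simp add: add_divide_distrib[symmetric])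
      have e2: "(1+s)/2 - (1-s)/2 = s" using assms(2) by (simp add: diff_divide_distrib[symmetric])
      have "((1+s)/2)\<^sup>2 * t + ((1-s)/2)\<^sup>2 * (-t) = ((1+s)/2 - (1-s)/2) * ((1+s)/2 + (1-s)/2) * t"
        using fac[of "(1+s)/2" "(1-s)/2"] .
      also have "\<dots> = c" using e1 e2 assms(5) unfolding s_def by simp
      finally show ?thesis .
    qed
    ultimately have "c \<in> M" by simp }
  then show ?thesis by auto
qed



locale setting2 = setting v res pan A
  for v :: "'k::field \<Rightarrow> 'g::linordered_ab_group_add"
    and res :: "'k \<Rightarrow> 'f::field"
    and pan :: "'k \<Rightarrow> 'f"
    and A :: "'k set" +
  fixes M :: "'g \<Rightarrow> 'f set"
  assumes char: "(2::'f) \<noteq> 0"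
    and Mqqm: "\<forall>g \<in> Hgrp v A \<union> {g. 0 \<le> g}. qqm UNIV (M g)"
    and Mmono: "\<forall>g \<in> Hgrp v A \<union> {g. 0 \<le> g}. \<forall>h \<in> Hgrp v A \<union> {g. 0 \<le> g}.
                  ((g \<le> h \<and> eq_mod_sq g h) \<or>
                   (M g = UNIV \<and> (eq_mod_H (Hgrp v A) g h \<or> g \<le> h))) \<longrightarrow> M g \<subseteq> M h"
begin

abbreviation "D \<equiv> H \<union> {g. 0 \<le> g}"
abbreviation "S \<equiv> (\<Union>g \<in> D. Phi v pan A (M g) g)"

definition P where "P x g \<longleftrightarrow> x \<in> A \<and> x \<noteq> 0 \<and> eq_mod_sq (v x) g \<and>
   (eq_mod_Hsq H (v x) g \<or> g < v x) \<and> pan x \<in> M g"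

lemma Smem: "x \<in> S \<longleftrightarrow> x = 0 \<or> (\<exists>g\<in>D. P x g)"
  unfolding Phi_def P_def by auto

lemma Mq: "g \<in> D \<Longrightarrow> qqm UNIV (M g)" using Mqqm by blast
lemma Madd: "g \<in> D \<Longrightarrow> a \<in> M g \<Longrightarrow> b \<in> M g \<Longrightarrow> a + b \<in> M g"
  using Mq unfolding qqm_def by blast
lemma Msq: "g \<in> D \<Longrightarrow> a \<in> M g \<Longrightarrow> k\<^sup>2 * a \<in> M g"
  using Mq unfolding qqm_def by blast

lemma Mmono': "g \<in> D \<Longrightarrow> h \<in> D \<Longrightarrow> (g \<le> h \<and> eq_mod_sq g h) \<or> (M g = UNIV \<and> (eq_mod_H H g h \<or> g \<le> h)) \<Longrightarrow> M g \<subseteq> M h"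
  using Mmono by blast

lemma ems_trans: "eq_mod_sq a b \<Longrightarrow> eq_mod_sq a c \<Longrightarrow> eq_mod_sq b c"
  unfolding eq_mod_sq_def
proof (elim exE)
  fix k l assume "a - b = k + k" "a - c = l + l"
  then have "b - c = (l - k) + (l - k)" by (simp add: algebra_simps)
  then show "\<exists>k. b - c = k + k" by blast
qed

lemma add_eq_case:
  assumes g: "g \<in> D" and h: "h \<in> D" and Px: "P x g" and Py: "P y h" and vxy: "v x = v y"
    and gh: "g \<le> h" and nz: "x + y \<noteq> 0"
  shows "x + y \<in> S"
proof -
  have xA: "x \<in> A" "x \<noteq> 0" "eq_mod_sq (v x) g" "pan x \<in> M g" using Px unfolding P_def by auto
  have yA: "y \<in> A" "y \<noteq> 0" "eq_mod_sq (v y) h" "eq_mod_Hsq H (v y) h \<or> h < v y" "pan y \<in> M h"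
    using Py unfolding P_def by auto
  have "eq_mod_sq g h" using ems_trans[OF xA(3)] yA(3) vxy by simp
  then have "M g \<subseteq> M h" using gh by (intro Mmono'[OF g h]) simp
  then have pxh: "pan x \<in> M h" using xA by blast
  have zA: "x + y \<in> A" using A_add xA yA by blast
  show ?thesis
  proof (cases "pan x + pan y = 0")
    case False
    then have e: "v (x + y) = v y" "pan (x+y) = pan x + pan y" using pan_eq[of x y] xA yA vxy nz by auto
    have "P (x+y) h" unfolding P_def using e zA nz yA Madd[OF h pxh yA(5)] by simp
    then show ?thesis using Smem h by blast
  next
    case True
    then have "pan y = - pan x" by (simp add: eq_neg_iff_add_eq_0 add.commute)
    then have "- pan x \<in> M h" using yA by simp
    then have Mh: "M h = UNIV" using qqm_full[OF Mq[OF h] char pxh _ pan_nz[OF xA(2)]] by blast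
    have lt: "v y < v (x + y)" using key[of x y] True xA yA vxy nz by simp
    have zD: "v (x+y) \<in> D" using Aval[OF zA nz] by blast
    have "eq_mod_H H h (v (x+y)) \<or> h \<le> v (x+y)"
    proof (cases "h \<le> v (x+y)")
      case False
      then have zh: "v (x+y) < h" by simp
      have "\<not> h < v y"
      proof
        assume "h < v y" then have "h < v (x+y)" using lt by (rule less_trans)
        then show False using zh by simp
      qed
      then obtain k where k: "k \<in> H" "v y - h = k + k" using yA unfolding eq_mod_Hsq_def by blast
      have kk: "k + k \<in> H" using Hadd k by blast
      have "0 \<le> h - v (x+y)" using zh by simp
      moreover have "h - v (x+y) \<le> - (k + k)" using k(2) lt by (simp add: algebra_simps)
      ultimately have "h - v (x+y) \<in> H" using Hneg[OF kk] by (rule Hconv)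
      then show ?thesis unfolding eq_mod_H_def by blast
    qed simp
    then have "M h \<subseteq> M (v (x+y))" using Mh by (intro Mmono'[OF h zD]) simp
    have "eq_mod_sq (v (x+y)) (v (x+y))" unfolding eq_mod_sq_def by (intro exI[of _ 0]) simp
    moreover have "eq_mod_Hsq H (v (x+y)) (v (x+y))" unfolding eq_mod_Hsq_def using H0 by (intro bexI[of _ 0]) simp_all
    moreover have "pan (x+y) \<in> M (v (x+y))" using \<open>M h \<subseteq> M (v (x+y))\<close> Mh by blast
    ultimately have "P (x+y) (v (x+y))" unfolding P_def using zA nz by simp
    then show ?thesis using Smem zD by blast
  qed
qed

lemma add_case:
  assumes g: "g \<in> D" and h: "h \<in> D" and Px: "P x g" and Py: "P y h" and vxy: "v x \<le> v y"
  shows "x + y \<in> S"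
proof (cases "x + y = 0")
  case True then show ?thesis using Smem by simp
next
  case nz: False
  have xA: "x \<in> A" "x \<noteq> 0" "eq_mod_sq (v x) g" "eq_mod_Hsq H (v x) g \<or> g < v x" "pan x \<in> M g"
    using Px unfolding P_def by auto
  have yA: "y \<in> A" "y \<noteq> 0" using Py unfolding P_def by auto
  show ?thesis
  proof (cases "v x < v y")
    case True
    then have e: "v (x + y) = v x" "pan (x+y) = pan x" using vadd_less pan_less xA yA nz by auto
    have "P (x+y) g" unfolding P_def using e xA nz A_add yA by simp
    then show ?thesis using Smem g by blast
  next
    case False
    then have eq: "v x = v y" using vxy by simp
    show ?thesis
    proof (cases "g \<le> h")
      case True show ?thesis by (rule add_eq_case[OF g h Px Py eq True nz])
    next
      case False
      then have "h \<le> g" by simp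
      then show ?thesis using add_eq_case[OF h g Py Px eq[symmetric] _] nz by (simp add: add.commute)
    qed
  qed
qed

lemma S_add: assumes "x \<in> S" "y \<in> S" shows "x + y \<in> S"
proof -
  have x: "x = 0 \<or> (\<exists>g\<in>D. P x g)" using assms(1) Smem by blast
  have y: "y = 0 \<or> (\<exists>g\<in>D. P y g)" using assms(2) Smem by blast
  { assume "x = 0" then have ?thesis using assms by simp }
  moreover { assume "y = 0" then have ?thesis using assms by simp }
  moreover { fix g h assume g: "g \<in> D" "P x g" and h: "h \<in> D" "P y h"
    have ?thesis
    proof (cases "v x \<le> v y")
      case True then show ?thesis using add_case[OF g(1) h(1) g(2) h(2)] by blast
    next
      case False then show ?thesis using add_case[OF h(1) g(1) h(2) g(2)] by (simp add: add.commute)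
    qed }
  ultimately show ?thesis using x y by blast
qed

lemma S_mult: assumes a: "a \<in> A" and xS: "x \<in> S" shows "a\<^sup>2 * x \<in> S"
proof -
  { assume "a = 0 \<or> x = 0" then have ?thesis using Smem by auto }
  moreover { fix g assume g: "g \<in> D" "P x g" and nz: "a \<noteq> 0" "x \<noteq> 0"
    have xA: "x \<in> A" "eq_mod_sq (v x) g" "eq_mod_Hsq H (v x) g \<or> g < v x" "pan x \<in> M g"
      using g unfolding P_def by auto
    obtain k where k: "v x - g = k + k" using xA unfolding eq_mod_sq_def by blast
    have w: "v (a\<^sup>2 * x) = v a + v a + v x" using vmult[of "a*a" x] vmult[of a a] nz
      by (simp add: power2_eq_square)
    have wnz: "a\<^sup>2 * x \<noteq> 0" using nz by simp
    have wA: "a\<^sup>2 * x \<in> A" using A_mult a xA by (simp add: power2_eq_square)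
    obtain c where c: "c \<noteq> 0" "pan (x * a\<^sup>2) = pan x * c\<^sup>2" using pan6 nz by blast
    have pw: "pan (a\<^sup>2 * x) \<in> M g" using c Msq[OF g(1) xA(4), of c] by (simp add: mult.commute)
    have ems: "eq_mod_sq (v (a\<^sup>2 * x)) g" unfolding eq_mod_sq_def using w k
      by (intro exI[of _ "v a + k"]) (simp add: algebra_simps)
    have cond: "eq_mod_Hsq H (v (a\<^sup>2 * x)) g \<or> g < v (a\<^sup>2 * x)"
    proof (cases "eq_mod_Hsq H (v x) g")
      case True
      then obtain l where l: "l \<in> H" "v x - g = l + l" unfolding eq_mod_Hsq_def by blast
      show ?thesis
      proof (cases "v a \<in> H")
        case True
        then have "v a + l \<in> H" using Hadd l by blast
        moreover have "v (a\<^sup>2 * x) - g = (v a + l) + (v a + l)" using w l by (simp add: algebra_simps)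
        ultimately show ?thesis unfolding eq_mod_Hsq_def by blast
      next
        case False
        then have "0 \<le> v a" using Aval a nz by blast
        then have "- l < v a" using big False Hneg l by blast
        then have "-l + l < v a + l" by (rule add_strict_right_mono)
        then have "0 < v a + l" by simp
        then have "0 < (v a + l) + (v a + l)" by (simp add: add_pos_pos)
        then show ?thesis using w l by (simp add: algebra_simps)
      qed
    next
      case False
      then have gx: "g < v x" using xA by blast
      show ?thesis
      proof (cases "0 \<le> v a")
        case True
        then have "0 \<le> v a + v a" by (simp add: add_nonneg_nonneg)
        then have "0 + g < (v a + v a) + v x" using gx by (rule add_le_less_mono)
        then show ?thesis using w by simp
      next
        case False
        then have vaH: "v a \<in> H" using Aneg a nz by simp
        show ?thesis
        proof (cases "g < v (a\<^sup>2 * x)")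
          case False
          then have "v a + v a + v x \<le> g" using w by simp
          then have "0 \<le> v x - g" "v x - g \<le> - (v a + v a)" using gx by (simp_all add: algebra_simps)
          moreover have "- (v a + v a) \<in> H" using Hneg Hadd vaH by blast
          ultimately have "v x - g \<in> H" by (rule Hconv)
          then have "k + k \<in> H" using k by simp
          then have kH: "k \<in> H" using Hhalf by blast
          have "v a + k \<in> H" using Hadd[OF vaH kH] by simp
          moreover have "v (a\<^sup>2 * x) - g = (v a + k) + (v a + k)" using w k
            by (simp add: algebra_simps)
          ultimately show ?thesis unfolding eq_mod_Hsq_def by blast
        qed simp
      qed
    qed
    have "P (a\<^sup>2 * x) g" unfolding P_def using wA wnz ems cond pw by simp
    then have ?thesis using Smem g by blast }
  moreover have "x = 0 \<or> (\<exists>g\<in>D. P x g)" using xS Smem by blast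
  ultimately show ?thesis by blast
qed

lemma S_qqm: "qqm A S"
  unfolding qqm_def
proof (intro conjI ballI)
  show "S \<subseteq> A" proof fix x assume "x \<in> S" then have "x = 0 \<or> (\<exists>g\<in>D. P x g)" using \<open>x \<in> S\<close> Smem by blast
    then show "x \<in> A" using A_0 unfolding P_def by blast qed
next
  fix x y assume "x \<in> S" "y \<in> S" then show "x + y \<in> S" by (rule S_add)
next
  fix a x assume "a \<in> A" "x \<in> S" then show "a\<^sup>2 * x \<in> S" by (rule S_mult)
qed

end

theorem mainTheorem8:
  fixes v :: "'k::field \<Rightarrow> 'g::linordered_ab_group_add"
    and res :: "'k \<Rightarrow> 'f::field"
    and pan :: "'k \<Rightarrow> 'f"
    and A :: "'k set"
    and M :: "'g \<Rightarrow> 'f set"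
  assumes val: "valuation v"
    and resm: "residue_map v res"
    and char: "(2::'f) \<noteq> 0"
    and hens: "two_henselian v res"
    and pac: "pseudo_ac v res pan"
    and subA: "subring_between v A"
    and Mqqm: "\<forall>g \<in> Hgrp v A \<union> {g. 0 \<le> g}. qqm UNIV (M g)"
    and Mmono: "\<forall>g \<in> Hgrp v A \<union> {g. 0 \<le> g}. \<forall>h \<in> Hgrp v A \<union> {g. 0 \<le> g}.
                  ((g \<le> h \<and> eq_mod_sq g h) \<or>
                   (M g = UNIV \<and> (eq_mod_H (Hgrp v A) g h \<or> g \<le> h))) \<longrightarrow> M g \<subseteq> M h"
  shows "qqm A (\<Union>g \<in> Hgrp v A \<union> {g. 0 \<le> g}. Phi v pan A (M g) g)"
proof -
  have s1: "setting v res pan A" using val resm pac subA by (rule setting.intro)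
  have s2: "setting2_axioms v A M" using char Mqqm Mmono by (rule setting2_axioms.intro)
  interpret setting2 v res pan A M using s1 s2 by (rule setting2.intro)
  show ?thesis by (rule S_qqm)
qed

end
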